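(* Let $T$ be an order tree of height at most $\omega_1$ and $G$ a sparse $T$-graph. Then all the pairwise disjoint horizontal rays $R_t$ ($t\in T$) of the ray inflation $G\sharp\mathbb{N}$ belong to the same end $\varepsilon$, which is the only end of $G\sharp\mathbb{N}$; in particular $\deg(\varepsilon)=|T|$.
   Context: An order tree is a partial order $(T,\le)$ with a unique minimal element (the root) in which every set $\{t' : t'\le t\}$ is well-ordered; the height of $t$ is the order type of $\{t' : t'<t\}$; the height of $T$ is the supremum of the order types of its maximal chains. $t$ is a successor of $t'$ (its predecessor) if $t'<t$ with nothing strictly between; otherwise $t$ is a limit. A $T$-graph is a graph $G$ with $V(G)=T$ whose edges join comparable points and in which for every $t$ the neighbours of $t$ below $t$ (its down-neighbours) are cofinal in $\{s : s<t\}$. $G$ is sparse if the set of down-neighbours of each $t$ has order type $\mathrm{cf}(\{s : s<t\})$; for height at most $\omega_1$, this means a successor's only down-neighbour is its predecessor and a non-root limit's down-neighbours form a cofinal $\omega$-sequence below it. The ray inflation $G\sharp\mathbb{N}$ has vertex set $T\times\mathbb{N}$ and edges: $(t,n)(t,n+1)$ for all $t,n$ (so $R_t$, the subgraph on $\{t\}\times\mathbb{N}$, is a ray, the horizontal ray); $(t,n)(t',n)$ for all $n$ if $t$ is a successor with predecessor $t'$; $(t,n)(t_n,n)$ for all $n$ if $t$ is a non-root limit with down-neighbours $t_0<t_1<\cdots$. Ends are equivalence classes of rays, two rays being equivalent if there are infinitely many disjoint paths between them; the degree of an end is the maximum number of disjoint rays in it. *)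

theory Defs
  imports Main
begin

definition tlt :: "('a \<Rightarrow> 'a \<Rightarrow> bool) \<Rightarrow> 'a \<Rightarrow> 'a \<Rightarrow> bool" where
  "tlt le s t \<longleftrightarrow> le s t \<and> s \<noteq> t"

definition rel_on :: "('a \<Rightarrow> 'a \<Rightarrow> bool) \<Rightarrow> 'a set \<Rightarrow> 'a rel" where
  "rel_on le D = {(x, y). x \<in> D \<and> y \<in> D \<and> le x y}"

definition order_tree :: "'a set \<Rightarrow> ('a \<Rightarrow> 'a \<Rightarrow> bool) \<Rightarrow> bool" where
  "order_tree T le \<longleftrightarrow>
     (\<forall>x\<in>T. le x x) \<and>
     (\<forall>x\<in>T. \<forall>y\<in>T. le x y \<and> le y x \<longrightarrow> x = y) \<and>
     (\<forall>x\<in>T. \<forall>y\<in>T. \<forall>z\<in>T. le x y \<and> le y z \<longrightarrow> le x z) \<and>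
     (\<exists>!r. r \<in> T \<and> (\<forall>s\<in>T. le s r \<longrightarrow> s = r)) \<and>
     (\<forall>t\<in>T. well_order_on {s \<in> T. le s t} (rel_on le {s \<in> T. le s t}))"

definition tree_root :: "'a set \<Rightarrow> ('a \<Rightarrow> 'a \<Rightarrow> bool) \<Rightarrow> 'a" where
  "tree_root T le = (THE r. r \<in> T \<and> (\<forall>s\<in>T. le s r \<longrightarrow> s = r))"

definition is_chain :: "'a set \<Rightarrow> ('a \<Rightarrow> 'a \<Rightarrow> bool) \<Rightarrow> 'a set \<Rightarrow> bool" where
  "is_chain T le C \<longleftrightarrow> C \<subseteq> T \<and> (\<forall>x\<in>C. \<forall>y\<in>C. le x y \<or> le y x)"

definition maximal_chain :: "'a set \<Rightarrow> ('a \<Rightarrow> 'a \<Rightarrow> bool) \<Rightarrow> 'a set \<Rightarrow> bool" where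
  "maximal_chain T le C \<longleftrightarrow> is_chain T le C \<and> (\<forall>D. is_chain T le D \<and> C \<subseteq> D \<longrightarrow> D = C)"

text \<open>Height at most omega_1: the supremum of the order types of the maximal chains is at most
  omega_1, i.e. every maximal chain has order type at most omega_1 (= cardSuc natLeq).\<close>
definition height_le_omega1 :: "'a set \<Rightarrow> ('a \<Rightarrow> 'a \<Rightarrow> bool) \<Rightarrow> bool" where
  "height_le_omega1 T le \<longleftrightarrow>
     (\<forall>C. maximal_chain T le C \<longrightarrow> (rel_on le C, cardSuc natLeq) \<in> ordLeq)"

definition succ_of :: "'a set \<Rightarrow> ('a \<Rightarrow> 'a \<Rightarrow> bool) \<Rightarrow> 'a \<Rightarrow> 'a \<Rightarrow> bool" where
  "succ_of T le t t' \<longleftrightarrow> t \<in> T \<and> t' \<in> T \<and> tlt le t' t \<and>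
     \<not> (\<exists>s\<in>T. tlt le t' s \<and> tlt le s t)"

definition is_successor :: "'a set \<Rightarrow> ('a \<Rightarrow> 'a \<Rightarrow> bool) \<Rightarrow> 'a \<Rightarrow> bool" where
  "is_successor T le t \<longleftrightarrow> (\<exists>t'. succ_of T le t t')"

definition nonroot_limit :: "'a set \<Rightarrow> ('a \<Rightarrow> 'a \<Rightarrow> bool) \<Rightarrow> 'a \<Rightarrow> bool" where
  "nonroot_limit T le t \<longleftrightarrow> t \<in> T \<and> t \<noteq> tree_root T le \<and> \<not> is_successor T le t"

definition down_nbrs :: "'a set \<Rightarrow> ('a \<Rightarrow> 'a \<Rightarrow> bool) \<Rightarrow> ('a \<Rightarrow> 'a \<Rightarrow> bool) \<Rightarrow> 'a \<Rightarrow> 'a set" where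
  "down_nbrs T le E t = {u \<in> T. E t u \<and> tlt le u t}"

definition T_graph :: "'a set \<Rightarrow> ('a \<Rightarrow> 'a \<Rightarrow> bool) \<Rightarrow> ('a \<Rightarrow> 'a \<Rightarrow> bool) \<Rightarrow> bool" where
  "T_graph T le E \<longleftrightarrow>
     (\<forall>x y. E x y \<longrightarrow> E y x) \<and>
     (\<forall>x y. E x y \<longrightarrow> x \<in> T \<and> y \<in> T \<and> x \<noteq> y \<and> (le x y \<or> le y x)) \<and>
     (\<forall>t\<in>T. \<forall>s\<in>T. tlt le s t \<longrightarrow> (\<exists>u \<in> down_nbrs T le E t. le s u))"

text \<open>Sparseness, in the explicit form valid for trees of height at most omega_1:
  a successor's only down-neighbour is its predecessor, and the down-neighbours of a non-root
  limit form an omega-sequence (infinite, every element has only finitely many below it).\<close>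
definition sparse :: "'a set \<Rightarrow> ('a \<Rightarrow> 'a \<Rightarrow> bool) \<Rightarrow> ('a \<Rightarrow> 'a \<Rightarrow> bool) \<Rightarrow> bool" where
  "sparse T le E \<longleftrightarrow>
     (\<forall>t t'. succ_of T le t t' \<longrightarrow> down_nbrs T le E t = {t'}) \<and>
     (\<forall>t. nonroot_limit T le t \<longrightarrow>
        infinite (down_nbrs T le E t) \<and>
        (\<forall>u \<in> down_nbrs T le E t. finite {v \<in> down_nbrs T le E t. tlt le v u}))"

text \<open>The n-th down-neighbour t_n (counting from 0) of a non-root limit t.\<close>
definition nth_down :: "'a set \<Rightarrow> ('a \<Rightarrow> 'a \<Rightarrow> bool) \<Rightarrow> ('a \<Rightarrow> 'a \<Rightarrow> bool) \<Rightarrow> 'a \<Rightarrow> nat \<Rightarrow> 'a" where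
  "nth_down T le E t n =
     (THE u. u \<in> down_nbrs T le E t \<and> card {v \<in> down_nbrs T le E t. tlt le v u} = n)"

definition infl_base :: "'a set \<Rightarrow> ('a \<Rightarrow> 'a \<Rightarrow> bool) \<Rightarrow> ('a \<Rightarrow> 'a \<Rightarrow> bool) \<Rightarrow>
    'a \<times> nat \<Rightarrow> 'a \<times> nat \<Rightarrow> bool" where
  "infl_base T le E x y \<longleftrightarrow>
     fst x \<in> T \<and> fst y \<in> T \<and>
     ((fst y = fst x \<and> snd y = Suc (snd x)) \<or>
      (snd y = snd x \<and> succ_of T le (fst x) (fst y)) \<or>
      (snd y = snd x \<and> nonroot_limit T le (fst x) \<and> fst y = nth_down T le E (fst x) (snd x)))"

definition ray_inflation :: "'a set \<Rightarrow> ('a \<Rightarrow> 'a \<Rightarrow> bool) \<Rightarrow> ('a \<Rightarrow> 'a \<Rightarrow> bool) \<Rightarrow>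
    'a \<times> nat \<Rightarrow> 'a \<times> nat \<Rightarrow> bool" where
  "ray_inflation T le E x y \<longleftrightarrow> infl_base T le E x y \<or> infl_base T le E y x"

definition horiz_ray :: "'a \<Rightarrow> nat \<Rightarrow> 'a \<times> nat" where
  "horiz_ray t = (\<lambda>n. (t, n))"

definition is_ray :: "('v \<Rightarrow> 'v \<Rightarrow> bool) \<Rightarrow> (nat \<Rightarrow> 'v) \<Rightarrow> bool" where
  "is_ray H f \<longleftrightarrow> inj f \<and> (\<forall>n. H (f n) (f (Suc n)))"

definition is_path :: "('v \<Rightarrow> 'v \<Rightarrow> bool) \<Rightarrow> 'v list \<Rightarrow> bool" where
  "is_path H p \<longleftrightarrow> p \<noteq> [] \<and> distinct p \<and> (\<forall>i. Suc i < length p \<longrightarrow> H (p ! i) (p ! Suc i))"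

definition ray_equiv :: "('v \<Rightarrow> 'v \<Rightarrow> bool) \<Rightarrow> (nat \<Rightarrow> 'v) \<Rightarrow> (nat \<Rightarrow> 'v) \<Rightarrow> bool" where
  "ray_equiv H f g \<longleftrightarrow>
     (\<exists>P :: nat \<Rightarrow> 'v list.
        (\<forall>i. is_path H (P i) \<and> hd (P i) \<in> range f \<and> last (P i) \<in> range g) \<and>
        (\<forall>i j. i \<noteq> j \<longrightarrow> set (P i) \<inter> set (P j) = {}))"

definition end_of :: "('v \<Rightarrow> 'v \<Rightarrow> bool) \<Rightarrow> (nat \<Rightarrow> 'v) \<Rightarrow> (nat \<Rightarrow> 'v) set" where
  "end_of H f = {g. is_ray H g \<and> ray_equiv H f g}"

definition graph_ends :: "('v \<Rightarrow> 'v \<Rightarrow> bool) \<Rightarrow> (nat \<Rightarrow> 'v) set set" where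
  "graph_ends H = {end_of H f | f. is_ray H f}"

definition disjoint_rays :: "(nat \<Rightarrow> 'v) set \<Rightarrow> bool" where
  "disjoint_rays S \<longleftrightarrow> (\<forall>f\<in>S. \<forall>g\<in>S. f \<noteq> g \<longrightarrow> range f \<inter> range g = {})"

definition end_degree_is :: "(nat \<Rightarrow> 'v) set \<Rightarrow> 'b set \<Rightarrow> bool" where
  "end_degree_is eps K \<longleftrightarrow>
     (\<exists>S. S \<subseteq> eps \<and> disjoint_rays S \<and> (card_of S, card_of K) \<in> ordIso) \<and>
     (\<forall>S. S \<subseteq> eps \<and> disjoint_rays S \<longrightarrow> (card_of S, card_of K) \<in> ordLeq)"

end

theory Submission
  imports Defs
begin


lemma omega_seq:
  fixes lt :: "'a \<Rightarrow> 'a \<Rightarrow> bool" and D :: "'a set"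
  assumes tr: "\<And>x y z. x\<in>D \<Longrightarrow> y\<in>D \<Longrightarrow> z\<in>D \<Longrightarrow> lt x y \<Longrightarrow> lt y z \<Longrightarrow> lt x z"
    and irr: "\<And>x. x\<in>D \<Longrightarrow> \<not> lt x x"
    and tot: "\<And>x y. x\<in>D \<Longrightarrow> y\<in>D \<Longrightarrow> x \<noteq> y \<Longrightarrow> lt x y \<or> lt y x"
    and inf: "infinite D"
    and fin: "\<And>u. u\<in>D \<Longrightarrow> finite {v\<in>D. lt v u}"
  shows "\<exists>!u. u\<in>D \<and> card {v\<in>D. lt v u} = m"
proof -
  define f where "f u = card {v\<in>D. lt v u}" for u
  have mono: "f u < f w" if "u\<in>D" "w\<in>D" "lt u w" for u w
  proof -
    have "{v\<in>D. lt v u} \<subset> {v\<in>D. lt v w}"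
      using that tr irr by blast
    then show ?thesis unfolding f_def using fin[OF that(2)] psubset_card_mono by blast
  qed
  have inj: "inj_on f D"
  proof (rule inj_onI)
    fix u w assume "u\<in>D" "w\<in>D" "f u = f w"
    then show "u = w" using tot mono by (metis less_irrefl)
  qed
  have down: "\<exists>u\<in>D. f u = k" if "w\<in>D" "f w = Suc k" for w k
  proof -
    let ?P = "{v\<in>D. lt v w}"
    have finP: "finite ?P" using fin that(1) by blast
    have neP: "?P \<noteq> {}" using that unfolding f_def by (metis card.empty nat.distinct(1))
    have "Max (f ` ?P) \<in> f ` ?P" using finP neP by (intro Max_in) auto
    then obtain u where u: "u \<in> ?P" "f u = Max (f ` ?P)" by auto
    have maxu: "\<not> lt u v" if "v \<in> ?P" for v
    proof
      assume "lt u v"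
      then have "f u < f v" using mono u(1) that by blast
      moreover have "f v \<le> Max (f ` ?P)" using finP that by (intro Max_ge) auto
      ultimately show False using u(2) by simp
    qed
    have eq: "{v\<in>D. lt v u} = ?P - {u}"
    proof
      show "{v\<in>D. lt v u} \<subseteq> ?P - {u}"
      proof
        fix v assume "v \<in> {v\<in>D. lt v u}"
        then have "v\<in>D" "lt v u" by auto
        moreover have "u \<in> D" "lt u w" using u(1) by auto
        ultimately show "v \<in> ?P - {u}" using tr[of v u w] irr[of u] that(1) by auto
      qed
      show "?P - {u} \<subseteq> {v\<in>D. lt v u}"
      proof
        fix v assume v: "v \<in> ?P - {u}"
        then have "v \<in> D" "v \<noteq> u" by auto
        moreover have "u \<in> D" using u(1) by auto
        ultimately have "lt v u \<or> lt u v" using tot by blast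
        then show "v \<in> {v\<in>D. lt v u}" using maxu[of v] v \<open>v \<in> D\<close> by auto
      qed
    qed
    have "f u = card ?P - 1" unfolding f_def eq using u(1) finP by simp
    then show ?thesis using u(1) that unfolding f_def by auto
  qed
  have downall: "\<exists>u\<in>D. f u = f w - d" if "w\<in>D" for w d
  proof (induction d)
    case 0 then show ?case using that by auto
  next
    case (Suc d)
    then obtain u where u: "u\<in>D" "f u = f w - d" by auto
    show ?case
    proof (cases "f u = 0")
      case True
      then show ?thesis using u by auto
    next
      case False
      then obtain k where "f u = Suc k" by (cases "f u") auto
      then obtain u' where "u'\<in>D" "f u' = k" using down u(1) by blast
      moreover have "k = f w - Suc d" using u(2) \<open>f u = Suc k\<close> by arith
      ultimately show ?thesis by blast
    qed
  qed
  have "infinite (f ` D)" using inj inf finite_imageD by blast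
  then obtain w where w: "w \<in> D" "f w \<ge> m"
    by (metis finite_nat_set_iff_bounded_le imageE nat_le_linear)
  then obtain u where "u\<in>D" "f u = m" using downall[of w "f w - m"] by auto
  moreover have "x = u" if "x\<in>D" "f x = m" for x using inj that \<open>u\<in>D\<close> \<open>f u = m\<close> inj_onD by metis
  ultimately show ?thesis unfolding f_def by blast
qed



lemma ot_refl: "order_tree T le \<Longrightarrow> x \<in> T \<Longrightarrow> le x x"
  unfolding order_tree_def by blast
lemma ot_antisym: "order_tree T le \<Longrightarrow> x \<in> T \<Longrightarrow> y \<in> T \<Longrightarrow> le x y \<Longrightarrow> le y x \<Longrightarrow> x = y"
  unfolding order_tree_def by blast
lemma ot_trans: "order_tree T le \<Longrightarrow> x \<in> T \<Longrightarrow> y \<in> T \<Longrightarrow> z \<in> T \<Longrightarrow> le x y \<Longrightarrow> le y z \<Longrightarrow> le x z"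
  unfolding order_tree_def by blast
lemma ot_wo: "order_tree T le \<Longrightarrow> t \<in> T \<Longrightarrow> well_order_on {s \<in> T. le s t} (rel_on le {s \<in> T. le s t})"
  unfolding order_tree_def by blast
lemma ot_root: "order_tree T le \<Longrightarrow> tree_root T le \<in> T \<and> (\<forall>s\<in>T. le s (tree_root T le) \<longrightarrow> s = tree_root T le)"
  unfolding tree_root_def by (rule theI') (simp add: order_tree_def)

lemma ot_total:
  assumes "order_tree T le" "t \<in> T" "u \<in> T" "w \<in> T" "le u t" "le w t" "u \<noteq> w"
  shows "le u w \<or> le w u"
proof -
  have "total_on {s \<in> T. le s t} (rel_on le {s \<in> T. le s t})"
    using ot_wo[OF assms(1,2)] unfolding well_order_on_def linear_order_on_def by blast
  then show ?thesis using assms(3-7) unfolding total_on_def rel_on_def by auto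
qed

lemma nth_down_props:
  assumes ot: "order_tree T le" and sp: "sparse T le E" and lim: "nonroot_limit T le t"
  shows "nth_down T le E t m \<in> T \<and> tlt le (nth_down T le E t m) t"
proof -
  let ?D = "down_nbrs T le E t"
  have tT: "t \<in> T" using lim unfolding nonroot_limit_def by blast
  have DT: "\<And>u. u \<in> ?D \<Longrightarrow> u \<in> T \<and> tlt le u t" unfolding down_nbrs_def by blast
  have "\<exists>!u. u\<in>?D \<and> card {v\<in>?D. tlt le v u} = m"
  proof (rule omega_seq)
    fix x y z assume "x\<in>?D" "y\<in>?D" "z\<in>?D" "tlt le x y" "tlt le y z"
    then show "tlt le x z" using DT ot_trans[OF ot] ot_antisym[OF ot] unfolding tlt_def by metis
  next
    fix x show "\<not> tlt le x x" unfolding tlt_def by simp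
  next
    fix x y assume "x\<in>?D" "y\<in>?D" "x \<noteq> y"
    then show "tlt le x y \<or> tlt le y x" using DT ot_total[OF ot tT] unfolding tlt_def by metis
  next
    show "infinite ?D" using sp lim unfolding sparse_def by blast
  next
    fix u assume "u \<in> ?D" then show "finite {v\<in>?D. tlt le v u}" using sp lim unfolding sparse_def by blast
  qed
  then have "nth_down T le E t m \<in> ?D \<and> card {v\<in>?D. tlt le v (nth_down T le E t m)} = m"
    unfolding nth_down_def by (rule theI')
  then show ?thesis using DT by blast
qed

lemma edge_down:
  assumes ot: "order_tree T le" and sp: "sparse T le E" and tT: "t \<in> T" and nr: "t \<noteq> tree_root T le"
  shows "\<exists>s\<in>T. tlt le s t \<and> ray_inflation T le E (t, m) (s, m)"
proof (cases "is_successor T le t")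
  case True
  then obtain t' where st: "succ_of T le t t'" unfolding is_successor_def by blast
  then have "t' \<in> T" "tlt le t' t" unfolding succ_of_def by auto
  moreover have "ray_inflation T le E (t, m) (t', m)"
    using st tT \<open>t' \<in> T\<close> unfolding ray_inflation_def infl_base_def by auto
  ultimately show ?thesis by blast
next
  case False
  then have lim: "nonroot_limit T le t" using tT nr unfolding nonroot_limit_def by blast
  note p = nth_down_props[OF ot sp lim, of m]
  have "ray_inflation T le E (t, m) (nth_down T le E t m, m)"
    using lim tT p unfolding ray_inflation_def infl_base_def by auto
  then show ?thesis using p by blast
qed

definition RX where "RX H X = (\<lambda>x y. H x y \<and> x \<notin> X \<and> y \<notin> X)"

lemma descent:
  assumes ot: "order_tree T le" and sp: "sparse T le E"
    and lev: "\<forall>s\<in>T. (s, M) \<notin> X" and tT: "t \<in> T"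
  shows "(RX (ray_inflation T le E) X)\<^sup>*\<^sup>* (t, M) (tree_root T le, M)"
proof -
  let ?A = "{s \<in> T. le s t}"
  let ?r = "rel_on le ?A"
  have wf: "wf (?r - Id)" using ot_wo[OF ot tT] unfolding well_order_on_def by blast
  have "\<forall>s. s \<in> ?A \<longrightarrow> (RX (ray_inflation T le E) X)\<^sup>*\<^sup>* (s, M) (tree_root T le, M)"
  proof (rule allI, induct_tac s rule: wf_induct[OF wf])
    fix s assume IH: "\<forall>y. (y, s) \<in> ?r - Id \<longrightarrow> y \<in> ?A \<longrightarrow> (RX (ray_inflation T le E) X)\<^sup>*\<^sup>* (y, M) (tree_root T le, M)"
    show "s \<in> ?A \<longrightarrow> (RX (ray_inflation T le E) X)\<^sup>*\<^sup>* (s, M) (tree_root T le, M)"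
    proof
      assume sA: "s \<in> ?A"
      show "(RX (ray_inflation T le E) X)\<^sup>*\<^sup>* (s, M) (tree_root T le, M)"
      proof (cases "s = tree_root T le")
        case True then show ?thesis by simp
      next
        case False
        then obtain s' where s': "s' \<in> T" "tlt le s' s" "ray_inflation T le E (s, M) (s', M)"
          using edge_down[OF ot sp _ False, of M] sA by blast
        have "le s' t" using ot_trans[OF ot, of s' s t] s' sA tT unfolding tlt_def by auto
        then have "s' \<in> ?A" using s' by auto
        then have "(s', s) \<in> ?r - Id" using sA s' unfolding rel_on_def tlt_def by auto
        then have "(RX (ray_inflation T le E) X)\<^sup>*\<^sup>* (s', M) (tree_root T le, M)" using IH \<open>s' \<in> ?A\<close> by blast
        moreover have "RX (ray_inflation T le E) X (s, M) (s', M)"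
          using s' sA lev unfolding RX_def by auto
        ultimately show ?thesis by (rule converse_rtranclp_into_rtranclp[rotated])
      qed
    qed
  qed
  then show ?thesis using tT ot_refl[OF ot tT] by blast
qed

lemma column:
  assumes tT: "t \<in> T" and col: "\<forall>j\<ge>a. (t, j) \<notin> X"
  shows "(RX (ray_inflation T le E) X)\<^sup>*\<^sup>* (t, a) (t, a + d)"
proof (induction d)
  case 0 then show ?case by simp
next
  case (Suc d)
  have "RX (ray_inflation T le E) X (t, a + d) (t, Suc (a + d))"
    using tT col unfolding RX_def ray_inflation_def infl_base_def by auto
  then have "(RX (ray_inflation T le E) X)\<^sup>*\<^sup>* (t, a) (t, Suc (a + d))"
    using Suc by (rule rtranclp.rtrancl_into_rtrancl[rotated])
  then show ?case by simp
qed

lemma RX_sym: "(RX (ray_inflation T le E) X)\<^sup>*\<^sup>* x y \<Longrightarrow> (RX (ray_inflation T le E) X)\<^sup>*\<^sup>* y x"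
proof -
  have "symp (RX (ray_inflation T le E) X)" unfolding RX_def ray_inflation_def symp_def by blast
  then have "symp (RX (ray_inflation T le E) X)\<^sup>*\<^sup>*" by (rule symp_rtranclp)
  then show "(RX (ray_inflation T le E) X)\<^sup>*\<^sup>* x y \<Longrightarrow> (RX (ray_inflation T le E) X)\<^sup>*\<^sup>* y x"
    by (rule sympD)
qed

lemma rtranclp_path:
  assumes "(RX H X)\<^sup>*\<^sup>* a b" and "a \<notin> X"
  shows "\<exists>p. is_path H p \<and> hd p = a \<and> last p = b \<and> set p \<inter> X = {}"
  using assms
proof (induction rule: rtranclp_induct)
  case base
  then show ?case by (intro exI[of _ "[a]"]) (auto simp: is_path_def)
next
  case (step c d)
  then obtain p where p: "is_path H p" "hd p = a" "last p = c" "set p \<inter> X = {}" by blast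
  have dX: "d \<notin> X" "H c d" using step(2) unfolding RX_def by auto
  show ?case
  proof (cases "d \<in> set p")
    case True
    then obtain i where i: "i < length p" "p ! i = d" by (auto simp: in_set_conv_nth)
    let ?q = "take (Suc i) p"
    have "is_path H ?q" using p(1) i unfolding is_path_def by auto
    moreover have "hd ?q = a" using p(1,2) i unfolding is_path_def by (simp add: hd_take)
    moreover have "last ?q = d" using i by (simp add: take_Suc_conv_app_nth)
    moreover have "set ?q \<inter> X = {}" using p(4) set_take_subset[of "Suc i" p] by blast
    ultimately show ?thesis by blast
  next
    case False
    let ?q = "p @ [d]"
    have ne: "p \<noteq> []" using p(1) unfolding is_path_def by blast
    have "is_path H ?q" unfolding is_path_def
    proof (intro conjI allI impI)
      show "?q \<noteq> []" by simp
      show "distinct ?q" using p(1) False unfolding is_path_def by simp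
      fix i assume i: "Suc i < length ?q"
      show "H (?q ! i) (?q ! Suc i)"
      proof (cases "Suc i < length p")
        case True then show ?thesis using p(1) unfolding is_path_def by (simp add: nth_append)
      next
        case False
        then have "i = length p - 1" "Suc i = length p" using i by auto
        then show ?thesis using dX(2) p(3) ne by (simp add: nth_append last_conv_nth)
      qed
    qed
    moreover have "hd ?q = a" using p(1,2) unfolding is_path_def by simp
    moreover have "last ?q = d" by simp
    moreover have "set ?q \<inter> X = {}" using p(4) dX by auto
    ultimately show ?thesis by blast
  qed
qed





lemma ray_fst: "is_ray (ray_inflation T le E) f \<Longrightarrow> fst (f n) \<in> T"
  unfolding is_ray_def ray_inflation_def infl_base_def by blast

lemma ray_inf: "is_ray H f \<Longrightarrow> infinite (range f)"
  unfolding is_ray_def using finite_imageD by blast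

lemma reach:
  assumes ot: "order_tree T le" and sp: "sparse T le E" and fX: "finite X"
    and N: "\<forall>x\<in>X. snd x < N" and f: "is_ray (ray_inflation T le E) f"
  shows "\<exists>n M. f n \<notin> X \<and> (RX (ray_inflation T le E) X)\<^sup>*\<^sup>* (f n) (tree_root T le, M) \<and> N \<le> M"
proof -
  let ?F = "fst ` X \<times> {..<N}"
  have "finite ?F" using fX by simp
  moreover have "infinite (range f)" using ray_inf[OF f] .
  ultimately have "\<not> range f \<subseteq> ?F" using finite_subset by blast
  then obtain n where n: "f n \<notin> ?F" by blast
  obtain t k where tk: "f n = (t, k)" by (cases "f n")
  have tT: "t \<in> T" using ray_fst[OF f, of n] tk by simp
  have XF: "X \<subseteq> ?F"
  proof
    fix x assume x: "x \<in> X"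
    then have "fst x \<in> fst ` X" "snd x < N" using N by auto
    then show "x \<in> ?F" by (simp add: mem_Times_iff)
  qed
  then have nX: "f n \<notin> X" using n by blast
  have root: "tree_root T le \<in> T" using ot_root[OF ot] by blast
  show ?thesis
  proof (cases "t \<in> fst ` X")
    case False
    have col: "(RX (ray_inflation T le E) X)\<^sup>*\<^sup>* (t, k) (t, k + N)"
      by (rule column[OF tT]) (metis False fst_conv image_eqI)
    have lev: "\<forall>s\<in>T. (s, k + N) \<notin> X" using N by (metis not_add_less2 snd_conv)
    have "(RX (ray_inflation T le E) X)\<^sup>*\<^sup>* (t, k + N) (tree_root T le, k + N)"
      by (rule descent[OF ot sp lev tT])
    then show ?thesis using col nX tk by (intro exI[of _ n] exI[of _ "k + N"]) auto
  next
    case True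
    then have "N \<le> k" using n tk by auto
    then have lev: "\<forall>s\<in>T. (s, k) \<notin> X" using N by (metis leD snd_conv)
    have "(RX (ray_inflation T le E) X)\<^sup>*\<^sup>* (t, k) (tree_root T le, k)"
      by (rule descent[OF ot sp lev tT])
    then show ?thesis using nX tk \<open>N \<le> k\<close> by (intro exI[of _ n] exI[of _ k]) auto
  qed
qed

lemma conn:
  assumes ot: "order_tree T le" and sp: "sparse T le E" and fX: "finite X"
    and f: "is_ray (ray_inflation T le E) f" and g: "is_ray (ray_inflation T le E) g"
  shows "\<exists>p. is_path (ray_inflation T le E) p \<and> hd p \<in> range f \<and> last p \<in> range g \<and> set p \<inter> X = {}"
proof -
  obtain N where N: "\<forall>x\<in>X. snd x < N"
    using fX finite_nat_set_iff_bounded[of "snd ` X"] by auto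
  obtain n M where nM: "f n \<notin> X" "(RX (ray_inflation T le E) X)\<^sup>*\<^sup>* (f n) (tree_root T le, M)" "N \<le> M"
    using reach[OF ot sp fX N f] by blast
  obtain n' M' where nM': "g n' \<notin> X" "(RX (ray_inflation T le E) X)\<^sup>*\<^sup>* (g n') (tree_root T le, M')" "N \<le> M'"
    using reach[OF ot sp fX N g] by blast
  have root: "tree_root T le \<in> T" using ot_root[OF ot] by blast
  have mid: "(RX (ray_inflation T le E) X)\<^sup>*\<^sup>* (tree_root T le, M) (tree_root T le, M')"
  proof (cases "M \<le> M'")
    case True
    have "(RX (ray_inflation T le E) X)\<^sup>*\<^sup>* (tree_root T le, M) (tree_root T le, M + (M' - M))"
      by (rule column[OF root]) (use N nM(3) in force)
    then show ?thesis using True by simp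
  next
    case False
    have "(RX (ray_inflation T le E) X)\<^sup>*\<^sup>* (tree_root T le, M') (tree_root T le, M' + (M - M'))"
      by (rule column[OF root]) (use N nM'(3) in force)
    then have "(RX (ray_inflation T le E) X)\<^sup>*\<^sup>* (tree_root T le, M') (tree_root T le, M)"
      using False by simp
    then show ?thesis by (rule RX_sym)
  qed
  have "(RX (ray_inflation T le E) X)\<^sup>*\<^sup>* (f n) (g n')"
    using nM(2) mid RX_sym[OF nM'(2)] rtranclp_trans by metis
  then obtain p where "is_path (ray_inflation T le E) p" "hd p = f n" "last p = g n'" "set p \<inter> X = {}"
    using rtranclp_path[OF _ nM(1)] by blast
  then show ?thesis by blast
qed

primrec accum :: "('v set \<Rightarrow> 'v list) \<Rightarrow> nat \<Rightarrow> 'v set" where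
  "accum F 0 = {}"
| "accum F (Suc n) = accum F n \<union> set (F (accum F n))"

lemma accum_mono: "i \<le> j \<Longrightarrow> accum F i \<subseteq> accum F j"
  by (induction j) (auto simp: le_Suc_eq)

lemma all_equiv:
  assumes ot: "order_tree T le" and sp: "sparse T le E"
    and f: "is_ray (ray_inflation T le E) f" and g: "is_ray (ray_inflation T le E) g"
  shows "ray_equiv (ray_inflation T le E) f g"
proof -
  let ?H = "ray_inflation T le E"
  define Q where "Q S p \<longleftrightarrow> is_path ?H p \<and> hd p \<in> range f \<and> last p \<in> range g \<and> set p \<inter> S = {}" for S p
  define F where "F S = (SOME p. Q S p)" for S
  have FQ: "Q S (F S)" if "finite S" for S
    unfolding F_def using conn[OF ot sp that f g] unfolding Q_def by (rule someI_ex)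
  have fin: "finite (accum F n)" for n
  proof (induction n)
    case 0 then show ?case by simp
  next
    case (Suc n) then show ?case by simp
  qed
  define P where "P i = F (accum F i)" for i
  have PQ: "Q (accum F i) (P i)" for i unfolding P_def using FQ fin by blast
  have disj: "set (P i) \<inter> set (P j) = {}" if "i < j" for i j
  proof -
    have "set (P i) \<subseteq> accum F (Suc i)" unfolding P_def by simp
    also have "\<dots> \<subseteq> accum F j" using that by (intro accum_mono) simp
    finally show ?thesis using PQ[of j] unfolding Q_def by blast
  qed
  have A: "\<forall>i. is_path ?H (P i) \<and> hd (P i) \<in> range f \<and> last (P i) \<in> range g"
    using PQ unfolding Q_def by blast
  have B: "\<forall>i j. i \<noteq> j \<longrightarrow> set (P i) \<inter> set (P j) = {}"
  proof (intro allI impI)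
    fix i j :: nat assume "i \<noteq> j"
    then show "set (P i) \<inter> set (P j) = {}" using disj[of i j] disj[of j i] by (cases "i < j") auto
  qed
  show ?thesis unfolding ray_equiv_def using A B by blast
qed



lemma ivt_nat:
  fixes h :: "nat \<Rightarrow> nat"
  assumes step: "\<And>i. h (Suc i) \<le> Suc (h i)" and "h 0 \<le> m" and "m \<le> h n"
  shows "\<exists>i. h i = m"
  using assms(3)
proof (induction n)
  case 0 then show ?case using assms(2) by (intro exI[of _ 0]) simp
next
  case (Suc n)
  show ?case
  proof (cases "m \<le> h n")
    case True then show ?thesis using Suc.IH by blast
  next
    case False then show ?thesis using Suc.prems step[of n] by (intro exI[of _ "Suc n"]) simp
  qed
qed

lemma edge_snd: "ray_inflation T le E x y \<Longrightarrow> snd y \<le> Suc (snd x)"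
  unfolding ray_inflation_def infl_base_def by auto

lemma cross:
  assumes f: "is_ray (ray_inflation T le E) f" and fT: "finite T" and m: "snd (f 0) \<le> m"
  shows "\<exists>n. snd (f n) = m"
proof -
  let ?F = "T \<times> {..<m}"
  have "finite ?F" using fT by simp
  moreover have "infinite (range f)" using ray_inf[OF f] .
  ultimately have "\<not> range f \<subseteq> ?F" using finite_subset by blast
  then obtain n where n: "f n \<notin> ?F" by blast
  then have "m \<le> snd (f n)" using ray_fst[OF f, of n] by (cases "f n") auto
  moreover have "snd (f (Suc i)) \<le> Suc (snd (f i))" for i
    using f edge_snd unfolding is_ray_def by blast
  ultimately show ?thesis using ivt_nat[of "\<lambda>i. snd (f i)"] m by blast
qed

lemma disj_inj:
  assumes "disjoint_rays S" and "\<And>f. f \<in> S \<Longrightarrow> \<phi> f \<in> range f"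
  shows "inj_on \<phi> S"
proof (rule inj_onI)
  fix f g assume fg: "f \<in> S" "g \<in> S" "\<phi> f = \<phi> g"
  show "f = g"
  proof (rule ccontr)
    assume "f \<noteq> g"
    then have "range f \<inter> range g = {}" using assms(1) fg unfolding disjoint_rays_def by blast
    moreover have "\<phi> f \<in> range f" using assms(2)[OF fg(1)] .
    moreover have "\<phi> f \<in> range g" using assms(2)[OF fg(2)] fg(3) by simp
    ultimately show False by blast
  qed
qed

lemma deg_bound:
  assumes SR: "S \<subseteq> {g. is_ray (ray_inflation T le E) g}" and dS: "disjoint_rays S"
  shows "(card_of S, card_of T) \<in> ordLeq"
proof (cases "finite T")
  case False
  have inj: "inj_on (\<lambda>f. f 0) S" by (rule disj_inj[OF dS]) auto
  have "(\<lambda>f. f 0) ` S \<subseteq> T \<times> (UNIV :: nat set)"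
  proof
    fix x assume "x \<in> (\<lambda>f. f 0) ` S"
    then obtain f where "f \<in> S" "x = f 0" by blast
    then have "fst x \<in> T" using SR ray_fst by blast
    then show "x \<in> T \<times> (UNIV :: nat set)" by (cases x) auto
  qed
  then have "(card_of S, card_of (T \<times> (UNIV :: nat set))) \<in> ordLeq" using inj card_of_ordLeq by blast
  moreover have "(card_of (T \<times> (UNIV :: nat set)), card_of T) \<in> ordIso"
    using card_of_Times_infinite[OF False _ infinite_iff_card_of_nat[THEN iffD1, OF False]] by simp
  ultimately show ?thesis using ordLeq_ordIso_trans by blast
next
  case True
  have fc: "finite S \<and> card S \<le> card T"
  proof (rule ccontr)
    assume nc: "\<not> (finite S \<and> card S \<le> card T)"
    obtain S' where S': "S' \<subseteq> S" "finite S'" "card S' = Suc (card T)"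
    proof (cases "finite S")
      case True
      then have "Suc (card T) \<le> card S" using nc by simp
      then show ?thesis using obtain_subset_with_card_n that by metis
    next
      case False
      then show ?thesis using infinite_arbitrarily_large that by metis
    qed
    then have ne: "S' \<noteq> {}" by auto
    define m where "m = Max ((\<lambda>f. snd (f 0)) ` S')"
    have le_m: "snd (f 0) \<le> m" if "f \<in> S'" for f
      unfolding m_def using S'(2) that by (intro Max_ge) auto
    define \<phi> where "\<phi> f = f (SOME n. snd (f n) = m)" for f :: "nat \<Rightarrow> 'a \<times> nat"
    have phi: "\<phi> f \<in> range f \<and> snd (\<phi> f) = m \<and> fst (\<phi> f) \<in> T" if "f \<in> S'" for f
    proof -
      have r: "is_ray (ray_inflation T le E) f" using that S'(1) SR by blast
      have "\<exists>n. snd (f n) = m" by (rule cross[OF r True le_m[OF that]])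
      then have "snd (f (SOME n. snd (f n) = m)) = m" by (rule someI_ex)
      then show ?thesis unfolding \<phi>_def using ray_fst[OF r] by auto
    qed
    have dS': "disjoint_rays S'" using dS S'(1) unfolding disjoint_rays_def by blast
    have inj: "inj_on \<phi> S'" by (rule disj_inj[OF dS']) (use phi in blast)
    have "\<phi> ` S' \<subseteq> T \<times> {m}"
    proof
      fix x assume "x \<in> \<phi> ` S'"
      then obtain f where "f \<in> S'" "x = \<phi> f" by blast
      then have "fst x \<in> T" "snd x = m" using phi by auto
      then show "x \<in> T \<times> {m}" by (cases x) auto
    qed
    then have "card S' \<le> card (T \<times> {m})" using card_inj_on_le[OF inj] True by blast
    also have "\<dots> = card T" by (simp add: card_cartesian_product)
    finally show False using S'(3) by simp
  qed
  then obtain h where "h ` S \<subseteq> T" "inj_on h S" using card_le_inj True by blast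
  then show ?thesis using card_of_ordLeq by blast
qed


lemma horiz_is_ray: "t \<in> T \<Longrightarrow> is_ray (ray_inflation T le E) (horiz_ray t)"
  unfolding is_ray_def horiz_ray_def ray_inflation_def infl_base_def inj_def by auto

theorem lemma6p2:
  fixes T :: "'a set" and le :: "'a \<Rightarrow> 'a \<Rightarrow> bool" and E :: "'a \<Rightarrow> 'a \<Rightarrow> bool"
  assumes "order_tree T le"
    and "height_le_omega1 T le"
    and "T_graph T le E"
    and "sparse T le E"
  shows "\<exists>eps \<in> graph_ends (ray_inflation T le E).
           graph_ends (ray_inflation T le E) = {eps} \<and>
           (\<forall>t\<in>T. horiz_ray t \<in> eps) \<and>
           disjoint_rays (horiz_ray ` T) \<and>
           end_degree_is eps T"
proof -
  note ot = assms(1) and sp = assms(4)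
  let ?H = "ray_inflation T le E"
  define eps where "eps = {g. is_ray ?H g}"
  have root: "tree_root T le \<in> T" using ot_root[OF ot] by blast
  have endeq: "end_of ?H f = eps" if "is_ray ?H f" for f
    unfolding end_of_def eps_def using all_equiv[OF ot sp that] by auto
  have ge: "graph_ends ?H = {eps}"
  proof
    show "graph_ends ?H \<subseteq> {eps}"
    proof
      fix x assume "x \<in> graph_ends ?H"
      then obtain f where "x = end_of ?H f" "is_ray ?H f" unfolding graph_ends_def by blast
      then show "x \<in> {eps}" using endeq by simp
    qed
    have hr: "is_ray ?H (horiz_ray (tree_root T le))" by (rule horiz_is_ray[OF root])
    have he: "eps = end_of ?H (horiz_ray (tree_root T le))" using endeq[OF hr] by simp
    have "eps \<in> graph_ends ?H" unfolding graph_ends_def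
      by (rule CollectI, rule exI[of _ "horiz_ray (tree_root T le)"], rule conjI[OF he hr])
    then show "{eps} \<subseteq> graph_ends ?H" by simp
  qed
  have hin: "\<forall>t\<in>T. horiz_ray t \<in> eps" unfolding eps_def by (auto intro: horiz_is_ray)
  have hinj: "inj_on horiz_ray T"
  proof (rule inj_onI)
    fix s t assume "horiz_ray s = horiz_ray t"
    then have "horiz_ray s 0 = horiz_ray t 0" by simp
    then show "s = t" unfolding horiz_ray_def by simp
  qed
  have hdisj: "disjoint_rays (horiz_ray ` T)"
    unfolding disjoint_rays_def
  proof (intro ballI impI)
    fix f g assume "f \<in> horiz_ray ` T" "g \<in> horiz_ray ` T" "f \<noteq> g"
    then obtain s t where st: "f = horiz_ray s" "g = horiz_ray t" "s \<noteq> t" by blast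
    show "range f \<inter> range g = {}"
    proof (rule ccontr)
      assume "range f \<inter> range g \<noteq> {}"
      then obtain i j where "f i = g j" by blast
      then show False using st unfolding horiz_ray_def by simp
    qed
  qed
  have deg: "end_degree_is eps T"
    unfolding end_degree_is_def
  proof (intro conjI allI impI)
    have "bij_betw horiz_ray T (horiz_ray ` T)" using hinj by (simp add: bij_betw_imageI)
    then have "(card_of T, card_of (horiz_ray ` T)) \<in> ordIso" using card_of_ordIso by blast
    then have "(card_of (horiz_ray ` T), card_of T) \<in> ordIso" using ordIso_symmetric by blast
    moreover have "horiz_ray ` T \<subseteq> eps" using hin by blast
    ultimately show "\<exists>S. S \<subseteq> eps \<and> disjoint_rays S \<and> (card_of S, card_of T) \<in> ordIso"
      using hdisj by blast
  next
    fix S assume "S \<subseteq> eps \<and> disjoint_rays S"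
    then show "(card_of S, card_of T) \<in> ordLeq" using deg_bound[of S T le E] unfolding eps_def by blast
  qed
  show ?thesis using ge hin hdisj deg by blast
qed

end
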